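(* Assume that the presentation $\mathcal{P}^{[2]}_r(e,b)$ is consistent and that the test equations \begin{align*} c(a_k c(a_j a_i)) &= c(c(a_k a_j) a_i) & (w(a_k)+w(a_j)+w(a_i) \leq d),\\ c(r_j c(a_j a_i)) &= c( c(r_j a_j) a_i) & (r_j < \infty,\ w(a_j)+w(a_i) \leq d),\\ c(r_i c(a_j a_i )) &= c( a_j c( r_i a_i)) & (r_i < \infty,\ w(a_j)+w(a_i) \leq d) \end{align*} hold. Then $\tau_L$ and $\tau_R$ induce $R$-linear maps $\varphi_L, \varphi_R \colon A^{[2]} \rightarrow A^{[2]}$.
   Context: Let $R$ be a field or the ring of integers; all algebras are associative. $\mathcal{P}_r(e,b)$ is a nilpotent presentation on generators $a_1,\ldots,a_n$ with $r_1,\ldots,r_n \in \mathbb N \cup \{\infty\}$ and $e_{i,k}, b_{i,j,k} \in R$ (with $0 \leq e_{i,k}, b_{i,j,k} < r_k$ whenever $r_k<\infty$) and relations $r_i a_i = e_{i,i+1} a_{i+1} + \ldots + e_{i,n} a_n$ (for $r_i<\infty$) and $a_j a_i = b_{i,j,\ell+1} a_{\ell+1} + \ldots + b_{i,j,n} a_n$ with $\ell = \max\{i,j\}$ (for $1\le i,j\le n$). For $1 \le k \le n$, $\mathcal{P}^{[k]}_r(e,b)$ is the presentation on $a_k,\ldots,a_n$ whose relations are those relations of $\mathcal{P}_r(e,b)$ involving only these generators; $A^{[k]}$ is the algebra it defines and $F_k$ is the free associative algebra on $a_k,\ldots,a_n$. A presentation is consistent if each element of the defined algebra is represented by a unique reduced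 form $x_1a_1+\ldots+x_na_n$ ($0\le x_i<r_i$ if $r_i<\infty$). $c$ denotes the function on the free algebra induced by the collection algorithm, mapping an element to one of its reduced forms. $w$ is a weight function: $w(a_i)\in\mathbb N$ minimal subject to $w(a_k)\ge w(a_i)$ whenever $e_{i,k}\neq0$ and $w(a_k)\ge w(a_i)+w(a_j)$ whenever $b_{i,j,k}\ne 0$; $d=\max\{w(a_1),\ldots,w(a_n)\}$. The maps $\tau_L,\tau_R\colon F_2\to F_2$ are defined by $\tau_L(a_j)=\sum_{k=1}^n b_{j,1,k}a_k$ with $\tau_L(vw)=\tau_L(v)w$ for all $v,w\in F_2$, and $\tau_R(a_j)=\sum_{k=1}^n b_{1,j,k}a_k$ with $\tau_R(vw)=v\tau_R(w)$ for all $v,w\in F_2$ (i.e. left resp. right multiplication by $a_1$ expressed via the relations). *)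

theory Defs
  imports Main "HOL-Library.Extended_Nat" "HOL-Library.Function_Algebras"
begin

text \<open>Elements of the free (non-unital) associative R-algebra on generators a_1..a_n are
  represented as coefficient functions on words (lists of generator indices).
  The word [j, i] stands for the monomial a_j a_i.\<close>

type_synonym 'a falg = "nat list \<Rightarrow> 'a"

definition mon :: "nat list \<Rightarrow> 'a::zero_neq_one falg" where
  "mon w = (\<lambda>v. if v = w then 1 else 0)"

definition fmul :: "'a::comm_ring_1 falg \<Rightarrow> 'a falg \<Rightarrow> 'a falg" where
  "fmul f g = (\<lambda>w. \<Sum>i\<le>length w. f (take i w) * g (drop i w))"

definition fscale :: "'a::comm_ring_1 \<Rightarrow> 'a falg \<Rightarrow> 'a falg" where
  "fscale c f = (\<lambda>w. c * f w)"

definition free_alg :: "nat \<Rightarrow> nat \<Rightarrow> 'a::zero falg set" where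
  "free_alg n k = {f. finite {w. f w \<noteq> 0} \<and>
                      (\<forall>w. f w \<noteq> 0 \<longrightarrow> w \<noteq> [] \<and> set w \<subseteq> {k..n})}"

definition lin :: "nat \<Rightarrow> (nat \<Rightarrow> 'a::comm_ring_1) \<Rightarrow> 'a falg" where
  "lin n x = (\<lambda>w. \<Sum>t\<in>{1..n}. x t * mon [t] w)"

definition pres_rels :: "nat \<Rightarrow> (nat \<Rightarrow> enat) \<Rightarrow> (nat \<Rightarrow> nat \<Rightarrow> 'a::comm_ring_1)
    \<Rightarrow> (nat \<Rightarrow> nat \<Rightarrow> nat \<Rightarrow> 'a) \<Rightarrow> nat \<Rightarrow> 'a falg set" where
  "pres_rels n r e b k =
     {fscale (of_nat (the_enat (r i))) (mon [i]) - (\<lambda>w. \<Sum>t\<in>{i+1..n}. e i t * mon [t] w)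
        | i. i \<in> {k..n} \<and> r i \<noteq> \<infinity>}
   \<union> {mon [j, i] - (\<lambda>w. \<Sum>t\<in>{max i j + 1..n}. b i j t * mon [t] w)
        | i j. i \<in> {k..n} \<and> j \<in> {k..n}}"

inductive_set ideal_gen :: "nat \<Rightarrow> nat \<Rightarrow> 'a::comm_ring_1 falg set \<Rightarrow> 'a falg set"
  for n k G where
  gen: "g \<in> G \<Longrightarrow> g \<in> ideal_gen n k G"
| zero: "0 \<in> ideal_gen n k G"
| add: "x \<in> ideal_gen n k G \<Longrightarrow> y \<in> ideal_gen n k G \<Longrightarrow> x + y \<in> ideal_gen n k G"
| scale: "x \<in> ideal_gen n k G \<Longrightarrow> fscale c x \<in> ideal_gen n k G"
| lmul: "x \<in> ideal_gen n k G \<Longrightarrow> u \<noteq> [] \<Longrightarrow> set u \<subseteq> {k..n}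
          \<Longrightarrow> fmul (mon u) x \<in> ideal_gen n k G"
| rmul: "x \<in> ideal_gen n k G \<Longrightarrow> u \<noteq> [] \<Longrightarrow> set u \<subseteq> {k..n}
          \<Longrightarrow> fmul x (mon u) \<in> ideal_gen n k G"

text \<open>Kernel of F_k \<rightarrow> A^[k].\<close>
definition rel_ideal :: "nat \<Rightarrow> (nat \<Rightarrow> enat) \<Rightarrow> (nat \<Rightarrow> nat \<Rightarrow> 'a::comm_ring_1)
    \<Rightarrow> (nat \<Rightarrow> nat \<Rightarrow> nat \<Rightarrow> 'a) \<Rightarrow> nat \<Rightarrow> 'a falg set" where
  "rel_ideal n r e b k = ideal_gen n k (pres_rels n r e b k)"

text \<open>rng x m: the coefficient x lies in the admissible range for modulus m (for R = Z: 0 \<le> x < m).\<close>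
definition int_rng :: "int \<Rightarrow> nat \<Rightarrow> bool" where
  "int_rng x m \<longleftrightarrow> 0 \<le> x \<and> x < int m"

definition reduced :: "('a::zero \<Rightarrow> nat \<Rightarrow> bool) \<Rightarrow> nat \<Rightarrow> (nat \<Rightarrow> enat) \<Rightarrow> nat
    \<Rightarrow> (nat \<Rightarrow> 'a) \<Rightarrow> bool" where
  "reduced rng n r k x \<longleftrightarrow> (\<forall>t. t \<notin> {k..n} \<longrightarrow> x t = 0) \<and>
      (\<forall>t\<in>{k..n}. r t \<noteq> \<infinity> \<longrightarrow> rng (x t) (the_enat (r t)))"

definition consistent :: "('a::comm_ring_1 \<Rightarrow> nat \<Rightarrow> bool) \<Rightarrow> nat \<Rightarrow> (nat \<Rightarrow> enat)
    \<Rightarrow> (nat \<Rightarrow> nat \<Rightarrow> 'a) \<Rightarrow> (nat \<Rightarrow> nat \<Rightarrow> nat \<Rightarrow> 'a) \<Rightarrow> nat \<Rightarrow> bool" where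
  "consistent rng n r e b k \<longleftrightarrow>
     (\<forall>f\<in>free_alg n k. \<exists>x. reduced rng n r k x \<and> f - lin n x \<in> rel_ideal n r e b k) \<and>
     (\<forall>x y. reduced rng n r k x \<longrightarrow> reduced rng n r k y \<longrightarrow>
            lin n x - lin n y \<in> rel_ideal n r e b k \<longrightarrow> x = y)"

text \<open>Well-formedness of the data of a nilpotent presentation P_r(e,b); coefficients not
  occurring in any relation are taken to be 0.\<close>
definition nil_pres :: "('a::comm_ring_1 \<Rightarrow> nat \<Rightarrow> bool) \<Rightarrow> nat \<Rightarrow> (nat \<Rightarrow> enat)
    \<Rightarrow> (nat \<Rightarrow> nat \<Rightarrow> 'a) \<Rightarrow> (nat \<Rightarrow> nat \<Rightarrow> nat \<Rightarrow> 'a) \<Rightarrow> bool" where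
  "nil_pres rng n r e b \<longleftrightarrow>
     (\<forall>i\<in>{1..n}. r i \<noteq> 0) \<and>
     (\<forall>i k. e i k \<noteq> 0 \<longrightarrow> i \<in> {1..n} \<and> r i \<noteq> \<infinity> \<and> i < k \<and> k \<le> n) \<and>
     (\<forall>i k. i \<in> {1..n} \<longrightarrow> k \<in> {1..n} \<longrightarrow> r i \<noteq> \<infinity> \<longrightarrow> r k \<noteq> \<infinity>
            \<longrightarrow> rng (e i k) (the_enat (r k))) \<and>
     (\<forall>i j k. b i j k \<noteq> 0 \<longrightarrow> i \<in> {1..n} \<and> j \<in> {1..n} \<and> max i j < k \<and> k \<le> n) \<and>
     (\<forall>i j k. i \<in> {1..n} \<longrightarrow> j \<in> {1..n} \<longrightarrow> k \<in> {1..n} \<longrightarrow> r k \<noteq> \<infinity>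
            \<longrightarrow> rng (b i j k) (the_enat (r k)))"

definition weight_ok :: "nat \<Rightarrow> (nat \<Rightarrow> nat \<Rightarrow> 'a::zero) \<Rightarrow> (nat \<Rightarrow> nat \<Rightarrow> nat \<Rightarrow> 'a)
    \<Rightarrow> (nat \<Rightarrow> nat) \<Rightarrow> bool" where
  "weight_ok n e b w \<longleftrightarrow> (\<forall>i\<in>{1..n}. 1 \<le> w i) \<and>
     (\<forall>i\<in>{1..n}. \<forall>k\<in>{1..n}. e i k \<noteq> 0 \<longrightarrow> w i \<le> w k) \<and>
     (\<forall>i\<in>{1..n}. \<forall>j\<in>{1..n}. \<forall>k\<in>{1..n}. b i j k \<noteq> 0 \<longrightarrow> w i + w j \<le> w k)"

definition wt :: "nat \<Rightarrow> (nat \<Rightarrow> nat \<Rightarrow> 'a::zero) \<Rightarrow> (nat \<Rightarrow> nat \<Rightarrow> nat \<Rightarrow> 'a) \<Rightarrow> nat \<Rightarrow> nat" where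
  "wt n e b i = (LEAST m. \<exists>w. weight_ok n e b w \<and> w i = m)"

definition dmax :: "nat \<Rightarrow> (nat \<Rightarrow> nat \<Rightarrow> 'a::zero) \<Rightarrow> (nat \<Rightarrow> nat \<Rightarrow> nat \<Rightarrow> 'a) \<Rightarrow> nat" where
  "dmax n e b = Max (wt n e b ` {1..n})"

text \<open>Collection of a linear combination of generators (coefficient vector), using the
  power relations from a_1 upwards; dv/md are quotient and remainder in R.\<close>
definition col_step :: "('a::comm_ring_1 \<Rightarrow> 'a \<Rightarrow> 'a) \<Rightarrow> ('a \<Rightarrow> 'a \<Rightarrow> 'a) \<Rightarrow> (nat \<Rightarrow> enat)
    \<Rightarrow> (nat \<Rightarrow> nat \<Rightarrow> 'a) \<Rightarrow> nat \<Rightarrow> (nat \<Rightarrow> 'a) \<Rightarrow> (nat \<Rightarrow> 'a)" where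
  "col_step dv md r e t v =
     (if r t = \<infinity> then v
      else (let m = of_nat (the_enat (r t)); q = dv (v t) m; s = md (v t) m
            in (\<lambda>u. if u = t then s else v u + q * e t u)))"

definition collect :: "('a::comm_ring_1 \<Rightarrow> 'a \<Rightarrow> 'a) \<Rightarrow> ('a \<Rightarrow> 'a \<Rightarrow> 'a) \<Rightarrow> nat
    \<Rightarrow> (nat \<Rightarrow> enat) \<Rightarrow> (nat \<Rightarrow> nat \<Rightarrow> 'a) \<Rightarrow> (nat \<Rightarrow> 'a) \<Rightarrow> (nat \<Rightarrow> 'a)" where
  "collect dv md n r e v = fold (col_step dv md r e) [1..<n+1] v"

definition unitv :: "nat \<Rightarrow> nat \<Rightarrow> 'a::zero_neq_one" where
  "unitv i = (\<lambda>t. if t = i then 1 else 0)"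

text \<open>pvec b j i: the right-hand side of the relation for a_j a_i.\<close>
definition pvec :: "(nat \<Rightarrow> nat \<Rightarrow> nat \<Rightarrow> 'a) \<Rightarrow> nat \<Rightarrow> nat \<Rightarrow> nat \<Rightarrow> 'a" where
  "pvec b j i = (\<lambda>t. b i j t)"

text \<open>a_k * (sum v_m a_m), rewritten by the product relations.\<close>
definition lmulv :: "nat \<Rightarrow> (nat \<Rightarrow> nat \<Rightarrow> nat \<Rightarrow> 'a::comm_ring_1) \<Rightarrow> nat \<Rightarrow> (nat \<Rightarrow> 'a)
    \<Rightarrow> (nat \<Rightarrow> 'a)" where
  "lmulv n b k v = (\<lambda>t. \<Sum>m\<in>{1..n}. v m * b m k t)"

text \<open>(sum v_m a_m) * a_i, rewritten by the product relations.\<close>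
definition rmulv :: "nat \<Rightarrow> (nat \<Rightarrow> nat \<Rightarrow> nat \<Rightarrow> 'a::comm_ring_1) \<Rightarrow> (nat \<Rightarrow> 'a) \<Rightarrow> nat
    \<Rightarrow> (nat \<Rightarrow> 'a)" where
  "rmulv n b v i = (\<lambda>t. \<Sum>m\<in>{1..n}. v m * b i m t)"

definition svec :: "'a::comm_ring_1 \<Rightarrow> (nat \<Rightarrow> 'a) \<Rightarrow> (nat \<Rightarrow> 'a)" where
  "svec c v = (\<lambda>t. c * v t)"

definition test_equations :: "('a::comm_ring_1 \<Rightarrow> 'a \<Rightarrow> 'a) \<Rightarrow> ('a \<Rightarrow> 'a \<Rightarrow> 'a) \<Rightarrow> nat
    \<Rightarrow> (nat \<Rightarrow> enat) \<Rightarrow> (nat \<Rightarrow> nat \<Rightarrow> 'a) \<Rightarrow> (nat \<Rightarrow> nat \<Rightarrow> nat \<Rightarrow> 'a) \<Rightarrow> bool" where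
  "test_equations dv md n r e b \<longleftrightarrow>
     (let c = collect dv md n r e; w = wt n e b; d = dmax n e b;
          rr = (\<lambda>i. of_nat (the_enat (r i))) in
      (\<forall>i\<in>{1..n}. \<forall>j\<in>{1..n}. \<forall>k\<in>{1..n}. w k + w j + w i \<le> d \<longrightarrow>
          c (lmulv n b k (c (pvec b j i))) = c (rmulv n b (c (pvec b k j)) i)) \<and>
      (\<forall>i\<in>{1..n}. \<forall>j\<in>{1..n}. r j \<noteq> \<infinity> \<longrightarrow> w j + w i \<le> d \<longrightarrow>
          c (svec (rr j) (c (pvec b j i))) = c (rmulv n b (c (svec (rr j) (unitv j))) i)) \<and>
      (\<forall>i\<in>{1..n}. \<forall>j\<in>{1..n}. r i \<noteq> \<infinity> \<longrightarrow> w j + w i \<le> d \<longrightarrow>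
          c (svec (rr i) (c (pvec b j i))) = c (lmulv n b j (c (svec (rr i) (unitv i))))))"

text \<open>tau_L: a_j w maps to (a_1 a_j expressed via the relations) w; tau_R: w a_j maps to
  w (a_j a_1 expressed via the relations); both extended R-linearly.\<close>
definition tau_L :: "nat \<Rightarrow> (nat \<Rightarrow> nat \<Rightarrow> nat \<Rightarrow> 'a::comm_ring_1) \<Rightarrow> 'a falg \<Rightarrow> 'a falg" where
  "tau_L n b f = (\<lambda>u. case u of [] \<Rightarrow> 0 | t # u' \<Rightarrow> \<Sum>m\<in>{1..n}. f (m # u') * b m 1 t)"

definition tau_R :: "nat \<Rightarrow> (nat \<Rightarrow> nat \<Rightarrow> nat \<Rightarrow> 'a::comm_ring_1) \<Rightarrow> 'a falg \<Rightarrow> 'a falg" where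
  "tau_R n b f = (\<lambda>u. if u = [] then 0
                       else \<Sum>m\<in>{1..n}. f (butlast u @ [m]) * b 1 m (last u))"

definition induces_linear_map :: "'a::comm_ring_1 falg set \<Rightarrow> 'a falg set
    \<Rightarrow> ('a falg \<Rightarrow> 'a falg) \<Rightarrow> bool" where
  "induces_linear_map F I \<tau> \<longleftrightarrow> \<tau> ` F \<subseteq> F \<and>
     (\<forall>f\<in>F. \<forall>g\<in>F. \<forall>x y. \<tau> (fscale x f + fscale y g) = fscale x (\<tau> f) + fscale y (\<tau> g)) \<and>
     (\<forall>f\<in>F. \<forall>g\<in>F. f - g \<in> I \<longrightarrow> \<tau> f - \<tau> g \<in> I)"

end

theory Submission
  imports Defs
begin


lemma ig_diff: "x \<in> ideal_gen n k G \<Longrightarrow> y \<in> ideal_gen n k G \<Longrightarrow> x - y \<in> ideal_gen n k G"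
proof -
  assume "x \<in> ideal_gen n k G" "y \<in> ideal_gen n k G"
  then have "x + fscale (-1) y \<in> ideal_gen n k G" by (intro ideal_gen.add ideal_gen.scale)
  moreover have "x + fscale (-1) y = x - y" by (auto simp: fscale_def fun_eq_iff)
  ultimately show ?thesis by simp
qed

lemma ig_sum: "finite S \<Longrightarrow> (\<And>t. t \<in> S \<Longrightarrow> f t \<in> ideal_gen n k G) \<Longrightarrow> (\<lambda>w. \<Sum>t\<in>S. f t w) \<in> ideal_gen n k G"
proof (induction S rule: finite_induct)
  case empty
  then show ?case using ideal_gen.zero by (simp add: zero_fun_def)
next
  case (insert x F)
  have "(\<lambda>w. \<Sum>t\<in>insert x F. f t w) = f x + (\<lambda>w. \<Sum>t\<in>F. f t w)"
    using insert by (auto simp: fun_eq_iff)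
  then show ?case using insert by (auto intro: ideal_gen.add)
qed

lemma ig_nil: "x \<in> ideal_gen n k G \<Longrightarrow> (\<And>g. g \<in> G \<Longrightarrow> g [] = 0) \<Longrightarrow> x [] = 0"
  by (induction x rule: ideal_gen.induct) (auto simp: fscale_def fmul_def mon_def)


lemma fmul_mon_left: "fmul (mon u) g w = (if take (length u) w = u then g (drop (length u) w) else 0)"
proof -
  have "fmul (mon u) g w = (\<Sum>i\<le>length w. if i = length u then (if take (length u) w = u then g (drop (length u) w) else 0) else 0)"
    unfolding fmul_def mon_def
  proof (intro sum.cong refl)
    fix i assume "i \<in> {..length w}"
    then have *: "take i w = u \<Longrightarrow> i = length u" by (metis atMost_iff length_take min.absorb2)
    show "(if take i w = u then 1 else 0) * g (drop i w) = (if i = length u then (if take (length u) w = u then g (drop (length u) w) else 0) else 0)"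
    proof (cases "take i w = u")
      case True then show ?thesis using * by simp
    next
      case False then show ?thesis by auto
    qed
  qed
  also have "\<dots> = (if take (length u) w = u then g (drop (length u) w) else 0)"
  proof (cases "take (length u) w = u")
    case True
    then have "length u \<le> length w" by (metis length_take min.cobounded1)
    then show ?thesis using True by (simp add: sum.delta')
  qed simp
  finally show ?thesis .
qed

lemma fmul_mon_right: "fmul g (mon u) w = (if length u \<le> length w \<and> drop (length w - length u) w = u then g (take (length w - length u) w) else 0)"
proof -
  have "fmul g (mon u) w = (\<Sum>i\<le>length w. if i = length w - length u then (if length u \<le> length w \<and> drop (length w - length u) w = u then g (take (length w - length u) w) else 0) else 0)"
    unfolding fmul_def mon_def
  proof (intro sum.cong refl)
    fix i assume "i \<in> {..length w}"
    then have *: "drop i w = u \<Longrightarrow> i = length w - length u \<and> length u \<le> length w" by (metis atMost_iff length_drop diff_diff_cancel diff_le_self)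
    show "g (take i w) * (if drop i w = u then 1 else 0) = (if i = length w - length u then (if length u \<le> length w \<and> drop (length w - length u) w = u then g (take (length w - length u) w) else 0) else 0)"
    proof (cases "drop i w = u")
      case True then show ?thesis using * by simp
    next
      case False
      then show ?thesis by auto
    qed
  qed
  also have "\<dots> = (if length u \<le> length w \<and> drop (length w - length u) w = u then g (take (length w - length u) w) else 0)"
    by (simp add: sum.delta')
  finally show ?thesis .
qed


definition revf :: "'a falg \<Rightarrow> 'a falg" where "revf f = (\<lambda>w. f (rev w))"

lemma revf_fmul: "revf (fmul f g) = fmul (revf g) (revf (f::'a::comm_ring_1 falg))"
proof (rule ext)
  fix w :: "nat list"
  have "revf (fmul f g) w = (\<Sum>i\<le>length w. f (rev (drop (length w - i) w)) * g (rev (take (length w - i) w)))"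
    by (simp add: revf_def fmul_def take_rev drop_rev)
  also have "\<dots> = (\<Sum>j\<le>length w. f (rev (drop j w)) * g (rev (take j w)))"
    by (rule sum.reindex_bij_witness[where i="\<lambda>i. length w - i" and j="\<lambda>i. length w - i"]) auto
  also have "\<dots> = fmul (revf g) (revf f) w"
    by (simp add: fmul_def revf_def mult.commute)
  finally show "revf (fmul f g) w = fmul (revf g) (revf f) w" .
qed

lemma revf_mon: "revf (mon u) = mon (rev u)"
  by (auto simp: revf_def mon_def fun_eq_iff)

lemma lin_apply: "lin n x w = (\<Sum>t\<in>{1..n}. x t * mon [t] w)"
  by (simp add: lin_def)

lemma mon1: "mon [t] w = (if w = [t] then 1 else 0)" by (simp add: mon_def)

lemma lin_diff: "lin n (v - u) = lin n v - lin n u"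
  by (auto simp: lin_def fun_eq_iff algebra_simps sum_subtractf)
lemma lin_add: "lin n (v + u) = lin n v + lin n u"
  by (auto simp: lin_def fun_eq_iff algebra_simps sum.distrib)
lemma lin_svec: "lin n (svec c v) = fscale c (lin n v)"
  by (auto simp: lin_def svec_def fscale_def fun_eq_iff sum_distrib_left mult.assoc)
lemma lin_zero: "lin n 0 = 0"
  by (auto simp: lin_def fun_eq_iff)

lemma lin_nil: "lin n v [] = 0" by (simp add: lin_def mon_def)

lemma lin_single: "lin n v [t] = (if t \<in> {1..n} then v t else 0)"
proof -
  have "lin n v [t] = (\<Sum>ta\<in>{1..n}. if t = ta then v ta else 0)"
    unfolding lin_def mon_def by (intro sum.cong) auto
  then show ?thesis by (simp add: sum.delta)
qed

lemma lin_long: "length w \<noteq> 1 \<Longrightarrow> lin n v w = 0"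
  by (auto simp: lin_def mon_def intro!: sum.neutral)

lemma revf_lin: "revf (lin n v) = lin n v"
  by (auto simp: revf_def lin_def mon_def fun_eq_iff)

lemma tauL_add: "tau_L n b (f + g) = tau_L n b f + tau_L n b g"
  by (auto simp: tau_L_def fun_eq_iff algebra_simps sum.distrib split: list.split)
lemma tauL_diff: "tau_L n b (f - g) = tau_L n b f - tau_L n b g"
  by (auto simp: tau_L_def fun_eq_iff algebra_simps sum_subtractf split: list.split)
lemma tauL_scale: "tau_L n b (fscale c f) = fscale c (tau_L n b f)"
  by (auto simp: tau_L_def fscale_def fun_eq_iff sum_distrib_left mult.assoc split: list.split)
lemma tauL_zero: "tau_L n b 0 = 0"
  by (auto simp: tau_L_def fun_eq_iff split: list.split)

lemma tauR_add: "tau_R n b (f + g) = tau_R n b f + tau_R n b g"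
  by (auto simp: tau_R_def fun_eq_iff algebra_simps sum.distrib)
lemma tauR_scale: "tau_R n b (fscale c f) = fscale c (tau_R n b f)"
  by (auto simp: tau_R_def fscale_def fun_eq_iff sum_distrib_left mult.assoc)

lemma fscale_add: "fscale c (f + g) = fscale c f + fscale c g"
  by (auto simp: fscale_def fun_eq_iff algebra_simps)


locale pres =
  fixes n :: nat and r :: "nat \<Rightarrow> enat" and e :: "nat \<Rightarrow> nat \<Rightarrow> 'a::comm_ring_1"
    and b :: "nat \<Rightarrow> nat \<Rightarrow> nat \<Rightarrow> 'a" and dv md :: "'a \<Rightarrow> 'a \<Rightarrow> 'a"
  assumes e_supp: "e i k \<noteq> 0 \<Longrightarrow> 1 \<le> i \<and> i < k \<and> k \<le> n"
    and b_supp: "b i j k \<noteq> 0 \<Longrightarrow> 1 \<le> i \<and> i \<le> n \<and> 1 \<le> j \<and> j \<le> n \<and> max i j < k \<and> k \<le> n"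
    and dvmd: "x = dv x m * m + md x m"
    and dv0: "dv 0 m = 0" and md0: "md 0 m = 0"
    and dvself: "i \<in> {1..n} \<Longrightarrow> r i \<noteq> \<infinity> \<Longrightarrow> dv (of_nat (the_enat (r i))) (of_nat (the_enat (r i))) = 1"
begin

abbreviation "II \<equiv> rel_ideal n r e b 2"
abbreviation "cc \<equiv> collect dv md n r e"
abbreviation "rr t \<equiv> (of_nat (the_enat (r t)) :: 'a)"

definition powvec :: "nat \<Rightarrow> nat \<Rightarrow> 'a" where
  "powvec t = (\<lambda>u. (if u = t then rr t else 0) - e t u)"

lemma e_tt: "e t t = 0" using e_supp[of t t] by auto

lemma b_k1: "b i j (Suc 0) = 0" using b_supp[of i j 1] by auto
lemma b_k1': "b i j 1 = 0" using b_supp[of i j 1] by auto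
lemma mon_nil: "mon u [] = (if u = [] then 1 else 0)" by (simp add: mon_def)
lemma b_k0: "b i j 0 = 0" using b_supp[of i j 0] by auto

lemma II_add: "x \<in> II \<Longrightarrow> y \<in> II \<Longrightarrow> x + y \<in> II"
  unfolding rel_ideal_def by (rule ideal_gen.add)
lemma II_diff: "x \<in> II \<Longrightarrow> y \<in> II \<Longrightarrow> x - y \<in> II"
  unfolding rel_ideal_def by (rule ig_diff)
lemma II_scale: "x \<in> II \<Longrightarrow> fscale c x \<in> II"
  unfolding rel_ideal_def by (rule ideal_gen.scale)
lemma II_zero: "0 \<in> II"
  unfolding rel_ideal_def by (rule ideal_gen.zero)
lemma II_sum: "finite S \<Longrightarrow> (\<And>t. t \<in> S \<Longrightarrow> f t \<in> II) \<Longrightarrow> (\<lambda>w. \<Sum>t\<in>S. f t w) \<in> II"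
  unfolding rel_ideal_def by (rule ig_sum)
lemma II_lmul: "x \<in> II \<Longrightarrow> u \<noteq> [] \<Longrightarrow> set u \<subseteq> {2..n} \<Longrightarrow> fmul (mon u) x \<in> II"
  unfolding rel_ideal_def by (rule ideal_gen.lmul)
lemma II_rmul: "x \<in> II \<Longrightarrow> u \<noteq> [] \<Longrightarrow> set u \<subseteq> {2..n} \<Longrightarrow> fmul x (mon u) \<in> II"
  unfolding rel_ideal_def by (rule ideal_gen.rmul)
lemma II_gen: "g \<in> pres_rels n r e b 2 \<Longrightarrow> g \<in> II"
  unfolding rel_ideal_def by (rule ideal_gen.gen)

lemma II_nil: "x \<in> II \<Longrightarrow> x [] = 0"
  unfolding rel_ideal_def
  by (erule ig_nil) (auto simp: pres_rels_def fscale_def mon_def)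

lemma lin_powvec: "t \<in> {1..n} \<Longrightarrow> lin n (powvec t) = fscale (rr t) (mon [t]) - (\<lambda>w. \<Sum>u\<in>{t+1..n}. e t u * mon [u] w)"
proof (rule ext)
  fix w assume t: "t \<in> {1..n}"
  have "lin n (powvec t) w = (\<Sum>u\<in>{1..n}. (if u = t then rr t else 0) * mon [u] w - e t u * mon [u] w)"
    unfolding lin_def powvec_def by (simp add: left_diff_distrib)
  also have "\<dots> = (\<Sum>u\<in>{1..n}. (if u = t then rr t * mon [u] w else 0) - e t u * mon [u] w)"
    by (rule sum.cong) auto
  also have "\<dots> = (\<Sum>u\<in>{1..n}. (if u = t then rr t * mon [u] w else 0)) - (\<Sum>u\<in>{1..n}. e t u * mon [u] w)"
    by (rule sum_subtractf)
  also have "(\<Sum>u\<in>{1..n}. e t u * mon [u] w) = (\<Sum>u\<in>{t+1..n}. e t u * mon [u] w)"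
  proof (rule sum.mono_neutral_right)
    show "\<forall>u\<in>{1..n} - {t+1..n}. e t u * mon [u] w = 0"
    proof
      fix u assume "u \<in> {1..n} - {t+1..n}"
      then have "\<not> (1 \<le> t \<and> t < u \<and> u \<le> n)" by auto
      then have "e t u = 0" using e_supp[of t u] by blast
      then show "e t u * mon [u] w = 0" by simp
    qed
  qed auto
  finally show "lin n (powvec t) w = (fscale (rr t) (mon [t]) - (\<lambda>w. \<Sum>u\<in>{t+1..n}. e t u * mon [u] w)) w"
    using t by (simp add: sum.delta' fscale_def)
qed

lemma lin_pvec: "lin n (pvec b j i) = (\<lambda>w. \<Sum>t\<in>{max i j + 1..n}. b i j t * mon [t] w)"
proof (rule ext)
  fix w
  show "lin n (pvec b j i) w = (\<Sum>t\<in>{max i j + 1..n}. b i j t * mon [t] w)"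
    unfolding lin_def pvec_def
  proof (rule sum.mono_neutral_right)
    show "\<forall>t\<in>{1..n} - {max i j + 1..n}. b i j t * mon [t] w = 0"
    proof
      fix t assume "t \<in> {1..n} - {max i j + 1..n}"
      then have "\<not> (max i j < t \<and> t \<le> n)" by auto
      then have "b i j t = 0" using b_supp[of i j t] by blast
      then show "b i j t * mon [t] w = 0" by simp
    qed
  qed auto
qed

lemma gen_pow: "t \<in> {2..n} \<Longrightarrow> r t \<noteq> \<infinity> \<Longrightarrow> lin n (powvec t) \<in> II"
  by (rule II_gen) (auto simp: pres_rels_def lin_powvec)

lemma gen_prod: "i \<in> {2..n} \<Longrightarrow> j \<in> {2..n} \<Longrightarrow> mon [j, i] - lin n (pvec b j i) \<in> II"
  by (rule II_gen) (auto simp: pres_rels_def lin_pvec)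

inductive_set pspan :: "nat \<Rightarrow> (nat \<Rightarrow> 'a) set" for s where
  pz: "0 \<in> pspan s"
| ps: "p \<in> pspan s \<Longrightarrow> t \<in> {s..n} \<Longrightarrow> r t \<noteq> \<infinity> \<Longrightarrow> p + svec q (powvec t) \<in> pspan s"

lemma pspan_low: "p \<in> pspan s \<Longrightarrow> 1 \<le> u \<Longrightarrow> u < s \<Longrightarrow> p u = 0"
proof (induction p rule: pspan.induct)
  case (ps p t q)
  have "e t u = 0" using e_supp[of t u] ps by auto
  then show ?case using ps by (auto simp: svec_def powvec_def)
qed simp

lemma pspan_II: "p \<in> pspan s \<Longrightarrow> 2 \<le> s \<Longrightarrow> lin n p \<in> II"
proof (induction p rule: pspan.induct)
  case pz then show ?case by (simp only: lin_zero II_zero)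
next
  case (ps p t q)
  have "lin n (p + svec q (powvec t)) = lin n p + fscale q (lin n (powvec t))"
    by (simp only: lin_add lin_svec)
  moreover have "lin n (powvec t) \<in> II" using ps by (intro gen_pow) auto
  ultimately show ?case using ps II_add II_scale by metis
qed

lemma fold_id: "(\<And>t. t \<in> set L \<Longrightarrow> 1 \<le> t \<and> t < s) \<Longrightarrow> (\<And>u. 1 \<le> u \<Longrightarrow> u < s \<Longrightarrow> v u = 0)
   \<Longrightarrow> fold (col_step dv md r e) L v = v"
proof (induction L)
  case Nil then show ?case by simp
next
  case (Cons t L)
  have "col_step dv md r e t v = v"
    using Cons.prems by (auto simp: col_step_def Let_def dv0 md0 fun_eq_iff)
  then show ?case using Cons by simp
qed

lemma fold_pspan: "set L \<subseteq> {1..n} \<Longrightarrow> 1 \<le> s \<Longrightarrow> (\<And>u. 1 \<le> u \<Longrightarrow> u < s \<Longrightarrow> v u = 0)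
   \<Longrightarrow> \<exists>p\<in>pspan s. fold (col_step dv md r e) L v = v - p"
proof (induction L arbitrary: v)
  case Nil show ?case by (rule bexI[of _ 0]) (simp_all add: pz)
next
  case (Cons t L)
  define v' where "v' = col_step dv md r e t v"
  have "\<exists>q. (t \<in> {s..n} \<and> r t \<noteq> \<infinity> \<and> v' = v - svec q (powvec t)) \<or> v' = v"
  proof (cases "r t = \<infinity>")
    case True then show ?thesis by (auto simp: v'_def col_step_def)
  next
    case False
    show ?thesis
    proof (cases "t < s")
      case True
      then have "v t = 0" using Cons.prems by auto
      then have "v' = v" using False by (auto simp: v'_def col_step_def Let_def dv0 md0 fun_eq_iff)
      then show ?thesis by blast
    next
      case ns: False
      define q where "q = dv (v t) (rr t)"
      have v'eq: "v' = (\<lambda>u. if u = t then md (v t) (rr t) else v u + q * e t u)"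
        unfolding v'_def col_step_def if_not_P[OF False] Let_def q_def by simp
      have "v' = v - svec q (powvec t)"
      proof (rule ext)
        fix u
        show "v' u = (v - svec q (powvec t)) u"
        proof (cases "u = t")
          case True
          have "md (v t) (rr t) = v t - q * rr t" using dvmd[of "v t" "rr t"] unfolding q_def
            by (simp add: algebra_simps)
          then show ?thesis using True by (simp add: v'eq q_def svec_def powvec_def e_tt)
        next
          case nt: False
          then show ?thesis by (simp add: v'eq svec_def powvec_def)
        qed
      qed
      then show ?thesis using ns False Cons.prems by auto
    qed
  qed
  then obtain q where q: "(t \<in> {s..n} \<and> r t \<noteq> \<infinity> \<and> v' = v - svec q (powvec t)) \<or> v' = v" by blast
  have low: "\<And>u. 1 \<le> u \<Longrightarrow> u < s \<Longrightarrow> v' u = 0"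
  proof -
    fix u assume u: "1 \<le> u" "u < s"
    from q show "v' u = 0"
    proof
      assume h: "t \<in> {s..n} \<and> r t \<noteq> \<infinity> \<and> v' = v - svec q (powvec t)"
      then have "e t u = 0" using e_supp[of t u] u by auto
      then show ?thesis using h u Cons.prems by (auto simp: svec_def powvec_def)
    qed (use u Cons.prems in auto)
  qed
  obtain p where p: "p \<in> pspan s" "fold (col_step dv md r e) L v' = v' - p"
  proof -
    have "set L \<subseteq> {1..n}" using Cons.prems by simp
    then show ?thesis using Cons.IH[of v'] Cons.prems(2) low that by blast
  qed
  from q show ?case
  proof
    assume h: "t \<in> {s..n} \<and> r t \<noteq> \<infinity> \<and> v' = v - svec q (powvec t)"
    have "p + svec q (powvec t) \<in> pspan s" using p h by (auto intro: ps)
    moreover have "fold (col_step dv md r e) (t # L) v = v' - p"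
      using p(2) by (simp add: v'_def)
    moreover have "v' - p = v - (p + svec q (powvec t))"
      using h by (metis diff_diff_eq add.commute)
    ultimately show ?case by metis
  next
    assume "v' = v"
    then show ?case using p by (auto simp: v'_def)
  qed
qed

lemma collect_pspan: "v 1 = 0 \<Longrightarrow> \<exists>p\<in>pspan 2. cc v = v - p"
  unfolding collect_def
proof (rule fold_pspan)
  fix u :: nat assume "v 1 = 0" "1 \<le> u" "u < 2"
  moreover have "u = 1" using \<open>1 \<le> u\<close> \<open>u < 2\<close> by arith
  ultimately show "v u = 0" by simp
qed auto

lemma collect_1: "v 1 = 0 \<Longrightarrow> cc v 1 = 0"
  using collect_pspan[of v] pspan_low[of _ 2 1] by auto

lemma collect_II: "v 1 = 0 \<Longrightarrow> lin n (cc v) - lin n v \<in> II"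
proof -
  assume "v 1 = 0"
  then obtain p where "p \<in> pspan 2" "cc v = v - p" using collect_pspan by blast
  then have "lin n (cc v) = lin n v - lin n p" by (simp add: lin_diff)
  then have "lin n (cc v) - lin n v = fscale (-1) (lin n p)"
    by (auto simp: fscale_def fun_eq_iff)
  then show ?thesis using pspan_II[OF \<open>p \<in> pspan 2\<close>] II_scale by auto
qed

end

context pres begin


abbreviation "W \<equiv> wt n e b"
abbreviation "D \<equiv> dmax n e b"

lemma wok: "weight_ok n e b (\<lambda>i. 2^i)"
  unfolding weight_ok_def
proof (intro conjI ballI impI)
  fix i k assume "e i k \<noteq> 0"
  then have "i < k" using e_supp by blast
  then show "(2::nat)^i \<le> 2^k" by (simp add: power_increasing)
next
  fix i j k assume "b i j k \<noteq> 0"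
  then have "i < k" "j < k" using b_supp[of i j k] by auto
  then have "(2::nat)^i \<le> 2^(k-1)" "(2::nat)^j \<le> 2^(k-1)" by (simp_all add: power_increasing)
  moreover have "(2::nat)^k = 2^(k-1) + 2^(k-1)"
  proof -
    have "k = Suc (k-1)" using \<open>i < k\<close> by simp
    then have "(2::nat)^k = 2 * 2^(k-1)" by (metis power_Suc)
    then show ?thesis by simp
  qed
  ultimately show "(2::nat)^i + 2^j \<le> 2^k" by linarith
qed simp

lemma wt_ex: "\<exists>w. weight_ok n e b w \<and> w i = W i"
  unfolding wt_def by (rule LeastI_ex) (use wok in blast)

lemma wt_le: "weight_ok n e b w \<Longrightarrow> W i \<le> w i"
  unfolding wt_def by (rule Least_le) blast

lemma wt_b: "b i j k \<noteq> 0 \<Longrightarrow> W i + W j \<le> W k"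
proof -
  assume h: "b i j k \<noteq> 0"
  obtain w where w: "weight_ok n e b w" "w k = W k" using wt_ex by blast
  have "i \<in> {1..n}" "j \<in> {1..n}" "k \<in> {1..n}" using b_supp[OF h] by auto
  then have "w i + w j \<le> w k" using w(1) h unfolding weight_ok_def by blast
  moreover have "W i \<le> w i" "W j \<le> w j" using wt_le[OF w(1)] by auto
  ultimately show ?thesis using w(2) by linarith
qed

lemma wt_e: "e i k \<noteq> 0 \<Longrightarrow> W i \<le> W k"
proof -
  assume h: "e i k \<noteq> 0"
  obtain w where w: "weight_ok n e b w" "w k = W k" using wt_ex by blast
  have "i \<in> {1..n}" "k \<in> {1..n}" using e_supp[OF h] by auto
  then have "w i \<le> w k" using w(1) h unfolding weight_ok_def by blast
  moreover have "W i \<le> w i" using wt_le[OF w(1)] by auto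
  ultimately show ?thesis using w(2) by linarith
qed

lemma wt_d: "k \<in> {1..n} \<Longrightarrow> W k \<le> D"
  unfolding dmax_def by (rule Max_ge) auto

lemma b_heavy: "D < W i + W j \<Longrightarrow> b i j k = 0"
proof (rule ccontr)
  assume "D < W i + W j" "b i j k \<noteq> 0"
  then show False using wt_b[of i j k] wt_d[of k] b_supp[of i j k] by auto
qed

end

context pres begin

lemma lmulv_diff: "lmulv n b k (v - u) = lmulv n b k v - lmulv n b k u"
  by (auto simp: lmulv_def fun_eq_iff algebra_simps sum_subtractf)
lemma rmulv_diff: "rmulv n b (v - u) i = rmulv n b v i - rmulv n b u i"
  by (auto simp: rmulv_def fun_eq_iff algebra_simps sum_subtractf)
lemma lmulv_1: "lmulv n b k v 1 = 0" by (simp add: lmulv_def b_k1)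
lemma rmulv_1: "rmulv n b v i 1 = 0" by (simp add: rmulv_def b_k1)
lemma pvec_1: "pvec b j i 1 = 0" by (simp add: pvec_def b_k1)
lemma svec_1: "v 1 = 0 \<Longrightarrow> svec c v 1 = 0" by (simp add: svec_def)

lemma mon2_cons: "mon [k, t] (a # u') = (if a = k then mon [t] u' else 0)"
  by (simp add: mon_def)
lemma mon2_snoc: "mon [t, i] (xs @ [a]) = (if a = i then mon [t] xs else 0)"
  by (auto simp: mon_def)

lemma fmul_mon_lin: "fmul (mon [k]) (lin n v) w = (\<Sum>t\<in>{1..n}. v t * mon [k,t] w)"
proof (cases w)
  case Nil then show ?thesis by (simp add: fmul_mon_left mon_nil)
next
  case (Cons a u')
  then show ?thesis by (simp add: fmul_mon_left mon2_cons lin_def)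
qed

lemma fmul_lin_mon: "fmul (lin n v) (mon [i]) w = (\<Sum>t\<in>{1..n}. v t * mon [t,i] w)"
proof (cases w rule: rev_exhaust)
  case Nil then show ?thesis by (simp add: fmul_mon_right mon_nil)
next
  case (snoc xs a)
  then show ?thesis by (simp add: fmul_mon_right mon2_snoc lin_def)
qed

lemma sum_drop1: "f (1::nat) = 0 \<Longrightarrow> (\<Sum>t\<in>{1..n}. f t) = (\<Sum>t\<in>{2..n}. f t)"
proof -
  assume h: "f 1 = 0"
  have "(\<Sum>t\<in>{2..n}. f t) = (\<Sum>t\<in>{1..n}. f t)"
  proof (rule sum.mono_neutral_left)
    show "\<forall>i\<in>{1..n} - {2..n}. f i = 0"
    proof
      fix i assume "i \<in> {1..n} - {2..n}"
      then have "i = 1" by auto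
      then show "f i = 0" using h by simp
    qed
  qed auto
  then show ?thesis by simp
qed

end

context pres begin

lemma lin_lmulv: "lin n (lmulv n b k v) w = (\<Sum>t\<in>{1..n}. v t * lin n (pvec b k t) w)"
  unfolding lin_def lmulv_def pvec_def
  by (simp add: sum_distrib_left sum_distrib_right mult.assoc) (rule sum.swap)

lemma lin_rmulv: "lin n (rmulv n b v i) w = (\<Sum>t\<in>{1..n}. v t * lin n (pvec b t i) w)"
  unfolding lin_def rmulv_def pvec_def
  by (simp add: sum_distrib_left sum_distrib_right mult.assoc) (rule sum.swap)

end

context pres begin

lemma tauL_lin: "tau_L n b (lin n v) = lin n (lmulv n b 1 v)"
proof (rule ext)
  fix w
  show "tau_L n b (lin n v) w = lin n (lmulv n b 1 v) w"
  proof (cases w)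
    case Nil then show ?thesis by (simp add: tau_L_def lin_nil)
  next
    case (Cons a u')
    show ?thesis
    proof (cases "u' = []")
      case True
      have "tau_L n b (lin n v) w = (\<Sum>m\<in>{1..n}. v m * b m 1 a)"
        using Cons True by (auto simp: tau_L_def lin_single intro!: sum.cong)
      moreover have "a \<notin> {1..n} \<Longrightarrow> (\<Sum>m\<in>{1..n}. v m * b m 1 a) = 0"
      proof -
        assume a: "a \<notin> {1..n}"
        have "\<And>m. b m 1 a = 0"
        proof (rule ccontr)
          fix m assume "b m 1 a \<noteq> 0"
          then show False using b_supp[of m 1 a] a by auto
        qed
        then show ?thesis by simp
      qed
      ultimately show ?thesis using Cons True by (auto simp: lin_single lmulv_def)
    next
      case False
      then show ?thesis using Cons by (simp add: tau_L_def lin_long)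
    qed
  qed
qed

end

context pres begin

lemma tauL_mon2: "j \<in> {1..n} \<Longrightarrow> tau_L n b (mon [j, i]) = fmul (lin n (pvec b 1 j)) (mon [i])"
proof (rule ext)
  fix w assume j: "j \<in> {1..n}"
  show "tau_L n b (mon [j, i]) w = fmul (lin n (pvec b 1 j)) (mon [i]) w"
  proof (cases w)
    case Nil then show ?thesis by (simp add: tau_L_def fmul_lin_mon mon_nil)
  next
    case (Cons a u')
    have "tau_L n b (mon [j, i]) w = (\<Sum>m\<in>{1..n}. mon [j, i] (m # u') * b m 1 a)"
      using Cons by (simp add: tau_L_def)
    also have "\<dots> = (\<Sum>m\<in>{1..n}. if m = j then (if u' = [i] then b j 1 a else 0) else 0)"
      by (rule sum.cong) (auto simp: mon_def)
    also have "\<dots> = (if u' = [i] then b j 1 a else 0)" using j by (simp add: sum.delta')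
    also have "\<dots> = (\<Sum>t\<in>{1..n}. if t = a then (if u' = [i] then b j 1 t else 0) else 0)"
    proof (cases "a \<in> {1..n}")
      case True then show ?thesis by (simp add: sum.delta')
    next
      case False
      then have "b j 1 a = 0" using b_supp[of j 1 a] by (cases "b j 1 a = 0") auto
      then show ?thesis by simp
    qed
    also have "\<dots> = (\<Sum>t\<in>{1..n}. pvec b 1 j t * mon [t,i] w)"
      by (rule sum.cong) (auto simp: pvec_def mon_def Cons)
    also have "\<dots> = fmul (lin n (pvec b 1 j)) (mon [i]) w"
      by (simp only: fmul_lin_mon)
    finally show ?thesis .
  qed
qed


end

context pres begin

lemma L_lemma: "k \<in> {2..n} \<Longrightarrow> v 1 = 0 \<Longrightarrow> fmul (mon [k]) (lin n v) - lin n (lmulv n b k v) \<in> II"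
proof -
  assume k: "k \<in> {2..n}" and v1: "v 1 = 0"
  have "fmul (mon [k]) (lin n v) - lin n (lmulv n b k v) = (\<lambda>w. \<Sum>t\<in>{2..n}. fscale (v t) (mon [k,t] - lin n (pvec b k t)) w)"
  proof (rule ext)
    fix w
    have "(fmul (mon [k]) (lin n v) - lin n (lmulv n b k v)) w = (\<Sum>t\<in>{1..n}. fscale (v t) (mon [k,t] - lin n (pvec b k t)) w)"
      by (simp add: fmul_mon_lin lin_lmulv sum_subtractf[symmetric] fscale_def algebra_simps)
    also have "\<dots> = (\<Sum>t\<in>{2..n}. fscale (v t) (mon [k,t] - lin n (pvec b k t)) w)"
      by (rule sum_drop1) (simp add: fscale_def v1[simplified])
    finally show "(fmul (mon [k]) (lin n v) - lin n (lmulv n b k v)) w = (\<Sum>t\<in>{2..n}. fscale (v t) (mon [k,t] - lin n (pvec b k t)) w)" .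
  qed
  moreover have "(\<lambda>w. \<Sum>t\<in>{2..n}. fscale (v t) (mon [k,t] - lin n (pvec b k t)) w) \<in> II"
    by (rule II_sum) (auto intro!: II_scale gen_prod k)
  ultimately show ?thesis by simp
qed

lemma R_lemma: "i \<in> {2..n} \<Longrightarrow> v 1 = 0 \<Longrightarrow> fmul (lin n v) (mon [i]) - lin n (rmulv n b v i) \<in> II"
proof -
  assume i: "i \<in> {2..n}" and v1: "v 1 = 0"
  have "fmul (lin n v) (mon [i]) - lin n (rmulv n b v i) = (\<lambda>w. \<Sum>t\<in>{2..n}. fscale (v t) (mon [t,i] - lin n (pvec b t i)) w)"
  proof (rule ext)
    fix w
    have "(fmul (lin n v) (mon [i]) - lin n (rmulv n b v i)) w = (\<Sum>t\<in>{1..n}. fscale (v t) (mon [t,i] - lin n (pvec b t i)) w)"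
      by (simp add: fmul_lin_mon lin_rmulv sum_subtractf[symmetric] fscale_def algebra_simps)
    also have "\<dots> = (\<Sum>t\<in>{2..n}. fscale (v t) (mon [t,i] - lin n (pvec b t i)) w)"
      by (rule sum_drop1) (simp add: fscale_def v1[simplified])
    finally show "(fmul (lin n v) (mon [i]) - lin n (rmulv n b v i)) w = (\<Sum>t\<in>{2..n}. fscale (v t) (mon [t,i] - lin n (pvec b t i)) w)" .
  qed
  moreover have "(\<lambda>w. \<Sum>t\<in>{2..n}. fscale (v t) (mon [t,i] - lin n (pvec b t i)) w) \<in> II"
    by (rule II_sum) (auto intro!: II_scale gen_prod i)
  ultimately show ?thesis by simp
qed

end

context pres begin
lemma tauL_lmul: "t \<in> {1..n} \<Longrightarrow> tau_L n b (fmul (mon (t # u')) x) = (\<lambda>w. \<Sum>s\<in>{2..n}. fscale (b t 1 s) (fmul (mon (s # u')) x) w)"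
proof (rule ext)
  fix w assume t: "t \<in> {1..n}"
  show "tau_L n b (fmul (mon (t # u')) x) w = (\<Sum>s\<in>{2..n}. fscale (b t 1 s) (fmul (mon (s # u')) x) w)"
  proof (cases w)
    case Nil then show ?thesis by (simp add: tau_L_def fmul_mon_left fscale_def)
  next
    case (Cons a w')
    define P where "P = (take (length u') w' = u')"
    define X where "X = x (drop (length u') w')"
    have "tau_L n b (fmul (mon (t # u')) x) w = (\<Sum>m\<in>{1..n}. fmul (mon (t # u')) x (m # w') * b m 1 a)"
      by (simp add: tau_L_def Cons)
    also have "\<dots> = (\<Sum>m\<in>{1..n}. if m = t then (if P then X * b t 1 a else 0) else 0)"
      by (rule sum.cong) (auto simp: fmul_mon_left P_def X_def)
    also have "\<dots> = (if P then X * b t 1 a else 0)" using t by (simp add: sum.delta')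
    also have "\<dots> = (\<Sum>s\<in>{2..n}. if s = a then (if P then b t 1 s * X else 0) else 0)"
    proof (cases "a \<in> {2..n}")
      case True then show ?thesis by (simp add: sum.delta' mult.commute)
    next
      case False
      then have "b t 1 a = 0" using b_supp[of t 1 a] by (cases "b t 1 a = 0") auto
      then show ?thesis by simp
    qed
    also have "\<dots> = (\<Sum>s\<in>{2..n}. fscale (b t 1 s) (fmul (mon (s # u')) x) w)"
      by (rule sum.cong) (auto simp: fmul_mon_left fscale_def P_def X_def Cons)
    finally show ?thesis .
  qed
qed

lemma tauL_rmul: "x [] = 0 \<Longrightarrow> u \<noteq> [] \<Longrightarrow> tau_L n b (fmul x (mon u)) = fmul (tau_L n b x) (mon u)"
proof (rule ext)
  fix w assume x0: "x [] = 0" and u: "u \<noteq> []"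
  show "tau_L n b (fmul x (mon u)) w = fmul (tau_L n b x) (mon u) w"
  proof (cases w)
    case Nil then show ?thesis using u by (simp add: tau_L_def fmul_mon_right)
  next
    case (Cons a w')
    consider "length u = Suc (length w')" | "length u \<le> length w'" | "length u > Suc (length w')" by linarith
    then show ?thesis
    proof cases
      case 1
      have "tau_L n b (fmul x (mon u)) w = (\<Sum>m\<in>{1..n}. fmul x (mon u) (m # w') * b m 1 a)"
        by (simp add: tau_L_def Cons)
      also have "\<dots> = 0"
      proof (rule sum.neutral, rule ballI)
        fix m
        have "length (m # w') - length u = 0" using 1 by simp
        then show "fmul x (mon u) (m # w') * b m 1 a = 0" using 1 x0 by (simp add: fmul_mon_right)
      qed
      finally show ?thesis using 1 Cons by (simp add: fmul_mon_right tau_L_def)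
    next
      case 2
      define k where "k = length w' - length u"
      have k: "Suc (length w') - length u = Suc k" using 2 by (simp add: k_def)
      show ?thesis using Cons 2 by (simp add: tau_L_def fmul_mon_right k sum_distrib_right[symmetric]
           cong: if_cong)
    next
      case 3 then show ?thesis using Cons by (simp add: tau_L_def fmul_mon_right)
    qed
  qed
qed

end


context pres begin

lemma pspan_tau: "p \<in> pspan s \<Longrightarrow> (\<And>t. t \<in> {s..n} \<Longrightarrow> r t \<noteq> \<infinity> \<Longrightarrow> tau_L n b (lin n (powvec t)) \<in> II)
  \<Longrightarrow> tau_L n b (lin n p) \<in> II"
proof (induction p rule: pspan.induct)
  case pz then show ?case by (simp only: lin_zero tauL_zero II_zero)
next
  case (ps p t q)
  have "tau_L n b (lin n (p + svec q (powvec t))) = tau_L n b (lin n p) + fscale q (tau_L n b (lin n (powvec t)))"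
    by (simp only: lin_add lin_svec tauL_add tauL_scale)
  moreover have "tau_L n b (lin n (powvec t)) \<in> II" using ps by blast
  moreover have "tau_L n b (lin n p) \<in> II" using ps by blast
  ultimately show ?case using II_add II_scale by metis
qed

lemma pspan_1: "p \<in> pspan 2 \<Longrightarrow> p 1 = 0"
  using pspan_low[of p 2 1] by simp

lemma pspan_rmul: "p \<in> pspan 2 \<Longrightarrow> i \<in> {2..n} \<Longrightarrow> lin n (rmulv n b p i) \<in> II"
proof -
  assume p: "p \<in> pspan 2" and i: "i \<in> {2..n}"
  have a: "fmul (lin n p) (mon [i]) - lin n (rmulv n b p i) \<in> II" by (rule R_lemma[of i p, OF i pspan_1[OF p]])
  have "fmul (lin n p) (mon [i]) \<in> II" using i by (intro II_rmul pspan_II[OF p]) auto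
  then have "fmul (lin n p) (mon [i]) - (fmul (lin n p) (mon [i]) - lin n (rmulv n b p i)) \<in> II"
    using a by (rule II_diff)
  then show ?thesis by simp
qed

lemma pspan_lmul: "p \<in> pspan 2 \<Longrightarrow> k \<in> {2..n} \<Longrightarrow> lin n (lmulv n b k p) \<in> II"
proof -
  assume p: "p \<in> pspan 2" and k: "k \<in> {2..n}"
  have a: "fmul (mon [k]) (lin n p) - lin n (lmulv n b k p) \<in> II" by (rule L_lemma[of k p, OF k pspan_1[OF p]])
  have "fmul (mon [k]) (lin n p) \<in> II" using k by (intro II_lmul pspan_II[OF p]) auto
  then have "fmul (mon [k]) (lin n p) - (fmul (mon [k]) (lin n p) - lin n (lmulv n b k p)) \<in> II"
    using a by (rule II_diff)
  then show ?thesis by simp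
qed

definition eqv :: "'a falg \<Rightarrow> 'a falg \<Rightarrow> bool" (infix "\<approx>" 50) where "eqv f g \<longleftrightarrow> f - g \<in> II"

lemma eqv_refl: "f \<approx> f" by (simp add: eqv_def II_zero)
lemma eqv_sym: "f \<approx> g \<Longrightarrow> g \<approx> f"
proof -
  assume "f \<approx> g"
  then have "fscale (-1) (f - g) \<in> II" unfolding eqv_def by (rule II_scale)
  moreover have "fscale (-1) (f - g) = g - f" by (auto simp: fscale_def fun_eq_iff)
  ultimately show ?thesis by (simp add: eqv_def)
qed
lemma eqv_trans: "f \<approx> g \<Longrightarrow> g \<approx> h \<Longrightarrow> f \<approx> h"
proof -
  assume "f \<approx> g" "g \<approx> h"
  then have "(f - g) + (g - h) \<in> II" unfolding eqv_def by (rule II_add)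
  then show ?thesis by (simp add: eqv_def)
qed
lemma eqv_eq: "f = g \<Longrightarrow> f \<approx> g" by (simp add: eqv_refl)
lemma eq_eqv_trans [trans]: "f = g \<Longrightarrow> g \<approx> h \<Longrightarrow> f \<approx> h" by simp
lemma eqv_eq_trans [trans]: "f \<approx> g \<Longrightarrow> g = h \<Longrightarrow> f \<approx> h" by simp
lemmas eqv_trans' [trans] = eqv_trans
lemma eqv_add: "d \<in> II \<Longrightarrow> f + d \<approx> f" by (simp add: eqv_def)
lemma eqv_sub: "d \<in> II \<Longrightarrow> f - d \<approx> f"
proof -
  assume "d \<in> II"
  then have "fscale (-1) d \<in> II" by (rule II_scale)
  moreover have "fscale (-1) d = f - d - f" by (auto simp: fscale_def fun_eq_iff)
  ultimately show ?thesis by (simp add: eqv_def)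
qed
lemma eqv_scale: "f \<approx> g \<Longrightarrow> fscale c f \<approx> fscale c g"
proof -
  assume "f \<approx> g"
  then have "fscale c (f - g) \<in> II" unfolding eqv_def by (rule II_scale)
  moreover have "fscale c (f - g) = fscale c f - fscale c g" by (auto simp: fscale_def fun_eq_iff algebra_simps)
  ultimately show ?thesis by (simp add: eqv_def)
qed
lemma ceq: "v 1 = 0 \<Longrightarrow> lin n (cc v) \<approx> lin n v"
  unfolding eqv_def by (rule collect_II)

end

locale pres_te = pres +
  assumes te: "test_equations dv md n r e b"
begin

lemma te1: "i \<in> {1..n} \<Longrightarrow> j \<in> {1..n} \<Longrightarrow> k \<in> {1..n} \<Longrightarrow> W k + W j + W i \<le> D \<Longrightarrow>
  cc (lmulv n b k (cc (pvec b j i))) = cc (rmulv n b (cc (pvec b k j)) i)"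
  using te unfolding test_equations_def Let_def by blast

lemma te2: "i \<in> {1..n} \<Longrightarrow> j \<in> {1..n} \<Longrightarrow> r j \<noteq> \<infinity> \<Longrightarrow> W j + W i \<le> D \<Longrightarrow>
  cc (svec (rr j) (cc (pvec b j i))) = cc (rmulv n b (cc (svec (rr j) (unitv j))) i)"
  using te unfolding test_equations_def Let_def by blast

lemma te3: "i \<in> {1..n} \<Longrightarrow> j \<in> {1..n} \<Longrightarrow> r i \<noteq> \<infinity> \<Longrightarrow> W j + W i \<le> D \<Longrightarrow>
  cc (svec (rr i) (cc (pvec b j i))) = cc (lmulv n b j (cc (svec (rr i) (unitv i))))"
  using te unfolding test_equations_def Let_def by blast

end


context pres_te begin

lemma collect_u0:
  assumes t: "t \<in> {2..n}" and rt: "r t \<noteq> \<infinity>"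
  shows "\<exists>p\<in>pspan (t+1). cc (svec (rr t) (unitv t)) = (\<lambda>u. e t u) - p"
proof -
  define u0 where "u0 = svec (rr t) (unitv t)"
  have split: "[1..<n+1] = [1..<t] @ t # [t+1..<n+1]"
  proof -
    have "[1..<n+1] = [1..<t] @ [t..<t + (n+1-t)]" using t upt_add_eq_append[of 1 t "n+1-t"] by simp
    also have "t + (n+1-t) = n+1" using t by simp
    also have "[t..<n+1] = t # [t+1..<n+1]" using t by (simp add: upt_conv_Cons)
    finally show ?thesis .
  qed
  have f1: "fold (col_step dv md r e) [1..<t] u0 = u0"
    by (rule fold_id[where s=t]) (auto simp: u0_def svec_def unitv_def)
  have dself: "dv (rr t) (rr t) = 1" using dvself t rt by auto
  have mself: "md (rr t) (rr t) = 0" using dvmd[of "rr t" "rr t"] dself by simp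
  have f2: "col_step dv md r e t u0 = (\<lambda>u. e t u)"
    unfolding col_step_def if_not_P[OF rt] Let_def
    by (auto simp: fun_eq_iff u0_def svec_def unitv_def dself mself e_tt)
  have "\<exists>p\<in>pspan (t+1). fold (col_step dv md r e) [t+1..<n+1] (\<lambda>u. e t u) = (\<lambda>u. e t u) - p"
  proof (rule fold_pspan)
    fix u assume "1 \<le> u" "u < t + 1"
    then show "e t u = 0" using e_supp[of t u] by (cases "e t u = 0") auto
  qed (use t in auto)
  moreover have "cc u0 = fold (col_step dv md r e) [t+1..<n+1] (\<lambda>u. e t u)"
    unfolding collect_def split by (simp only: fold_append fold_Cons comp_apply f1 f2)
  ultimately show ?thesis by (simp add: u0_def)
qed

lemma powL: "t \<in> {2..n} \<Longrightarrow> r t \<noteq> \<infinity> \<Longrightarrow> tau_L n b (lin n (powvec t)) \<in> II"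
proof (induction "n - t" arbitrary: t rule: less_induct)
  case less
  have t: "t \<in> {2..n}" and rt: "r t \<noteq> \<infinity>" by fact+
  define E where "E = (\<lambda>u. e t u)"
  define u0 where "u0 = svec (rr t) (unitv t)"
  have pv: "powvec t = u0 - E" by (auto simp: powvec_def u0_def E_def svec_def unitv_def fun_eq_iff)
  have lu0: "lmulv n b 1 u0 = svec (rr t) (pvec b 1 t)"
  proof (rule ext)
    fix s
    have "lmulv n b 1 u0 s = (\<Sum>m\<in>{1..n}. if m = t then rr t * b t 1 s else 0)"
      unfolding lmulv_def by (rule sum.cong) (auto simp: u0_def svec_def unitv_def)
    also have "\<dots> = rr t * b t 1 s" using t by (simp add: sum.delta')
    finally show "lmulv n b 1 u0 s = svec (rr t) (pvec b 1 t) s" by (simp add: svec_def pvec_def)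
  qed
  have goal_eq: "tau_L n b (lin n (powvec t)) = lin n (lmulv n b 1 u0) - lin n (lmulv n b 1 E)"
    by (simp only: pv lin_diff tauL_diff tauL_lin)
  show ?case
  proof (cases "W 1 + W t \<le> D")
    case True
    obtain p where p: "p \<in> pspan (t+1)" "cc u0 = E - p"
      using collect_u0[OF t rt] unfolding u0_def E_def by blast
    have IHp: "tau_L n b (lin n p) \<in> II"
    proof (rule pspan_tau[OF p(1)])
      fix t' assume "t' \<in> {t+1..n}" "r t' \<noteq> \<infinity>"
      then show "tau_L n b (lin n (powvec t')) \<in> II" using less.hyps[of t'] t by auto
    qed
    have one: "(1::nat) \<in> {1..n}" using t by auto
    have T3: "cc (svec (rr t) (cc (pvec b 1 t))) = cc (lmulv n b 1 (cc u0))"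
      using te3[OF _ one rt] t True unfolding u0_def by auto
    have "lin n (lmulv n b 1 u0) = fscale (rr t) (lin n (pvec b 1 t))" by (simp only: lu0 lin_svec)
    also have "\<dots> \<approx> fscale (rr t) (lin n (cc (pvec b 1 t)))"
      by (rule eqv_scale, rule eqv_sym, rule ceq, rule pvec_1)
    also have "fscale (rr t) (lin n (cc (pvec b 1 t))) = lin n (svec (rr t) (cc (pvec b 1 t)))" by (simp only: lin_svec)
    also have "\<dots> \<approx> lin n (cc (svec (rr t) (cc (pvec b 1 t))))"
      by (rule eqv_sym, rule ceq, rule svec_1, rule collect_1, rule pvec_1)
    also have "\<dots> = lin n (cc (lmulv n b 1 (cc u0)))" by (simp only: T3)
    also have "\<dots> \<approx> lin n (lmulv n b 1 (cc u0))" by (rule ceq, rule lmulv_1)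
    also have "\<dots> = lin n (lmulv n b 1 E) - tau_L n b (lin n p)" by (simp only: p(2) lmulv_diff lin_diff tauL_lin)
    also have "\<dots> \<approx> lin n (lmulv n b 1 E)" by (rule eqv_sub[OF IHp])
    finally have "lin n (lmulv n b 1 u0) \<approx> lin n (lmulv n b 1 E)" .
    then show ?thesis unfolding goal_eq eqv_def .
  next
    case False
    have z1: "lmulv n b 1 u0 = 0"
      unfolding lu0 using b_heavy[of t 1] False by (auto simp: svec_def pvec_def fun_eq_iff)
    have z2: "lmulv n b 1 E = 0"
    proof (rule ext)
      fix s
      have "\<And>m. e t m * b m 1 s = 0"
      proof -
        fix m
        show "e t m * b m 1 s = 0"
        proof (cases "e t m = 0")
          case False
          then have "W t \<le> W m" by (rule wt_e)
          then have "b m 1 s = 0" using b_heavy[of m 1 s] \<open>\<not> (W 1 + W t \<le> D)\<close> by auto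
          then show ?thesis by simp
        qed simp
      qed
      then show "lmulv n b 1 E s = 0 s" by (simp add: lmulv_def E_def)
    qed
    show ?thesis unfolding goal_eq z1 z2 by (simp add: II_zero)
  qed
qed

lemma pspan2_tau: "p \<in> pspan 2 \<Longrightarrow> tau_L n b (lin n p) \<in> II"
  by (rule pspan_tau) (auto intro: powL)

lemma prodL: "i \<in> {2..n} \<Longrightarrow> j \<in> {2..n} \<Longrightarrow> tau_L n b (mon [j, i] - lin n (pvec b j i)) \<in> II"
proof -
  assume i: "i \<in> {2..n}" and j: "j \<in> {2..n}"
  define P where "P = pvec b j i"
  define P1 where "P1 = pvec b 1 j"
  have geq: "tau_L n b (mon [j, i] - lin n (pvec b j i)) = fmul (lin n P1) (mon [i]) - lin n (lmulv n b 1 P)"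
  proof -
    have m2: "tau_L n b (mon [j,i]) = fmul (lin n P1) (mon [i])" using tauL_mon2[of j i] j unfolding P1_def by auto
    show ?thesis by (simp only: tauL_diff m2 tauL_lin P_def)
  qed
  have A: "fmul (lin n P1) (mon [i]) \<approx> lin n (rmulv n b P1 i)"
    unfolding eqv_def P1_def by (rule R_lemma[of i "pvec b 1 j", OF i pvec_1])
  have B: "lin n (rmulv n b P1 i) \<approx> lin n (lmulv n b 1 P)"
  proof (cases "W 1 + W j + W i \<le> D")
    case True
    have one: "(1::nat) \<in> {1..n}" using i by auto
    have T1: "cc (lmulv n b 1 (cc P)) = cc (rmulv n b (cc P1) i)"
      using te1[OF _ _ one True] i j unfolding P_def P1_def by auto
    obtain p where p: "p \<in> pspan 2" "cc P = P - p" using collect_pspan[of "pvec b j i", OF pvec_1[of j i]] P_def by blast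
    obtain p' where p': "p' \<in> pspan 2" "cc P1 = P1 - p'" using collect_pspan[of "pvec b 1 j", OF pvec_1[of 1 j]] P1_def by blast
    have "lin n (rmulv n b P1 i) = lin n (rmulv n b (cc P1) i) + lin n (rmulv n b p' i)"
      by (simp add: p'(2) rmulv_diff lin_diff)
    also have "\<dots> \<approx> lin n (rmulv n b (cc P1) i)" by (rule eqv_add, rule pspan_rmul[OF p'(1) i])
    also have "\<dots> \<approx> lin n (cc (rmulv n b (cc P1) i))" by (rule eqv_sym, rule ceq, rule rmulv_1)
    also have "\<dots> = lin n (cc (lmulv n b 1 (cc P)))" by (simp only: T1)
    also have "\<dots> \<approx> lin n (lmulv n b 1 (cc P))" by (rule ceq, rule lmulv_1)
    also have "\<dots> = lin n (lmulv n b 1 P) - tau_L n b (lin n p)" by (simp only: p(2) lmulv_diff lin_diff tauL_lin)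
    also have "\<dots> \<approx> lin n (lmulv n b 1 P)" by (rule eqv_sub[OF pspan2_tau[OF p(1)]])
    finally show ?thesis .
  next
    case False
    have z1: "rmulv n b P1 i = 0"
    proof (rule ext)
      fix s
      have "\<And>m. b j 1 m * b i m s = 0"
      proof -
        fix m
        show "b j 1 m * b i m s = 0"
        proof (cases "b j 1 m = 0")
          case False
          then have "W j + W 1 \<le> W m" by (rule wt_b)
          then have "b i m s = 0" using b_heavy[of i m s] \<open>\<not> (W 1 + W j + W i \<le> D)\<close> by auto
          then show ?thesis by simp
        qed simp
      qed
      then show "rmulv n b P1 i s = 0 s" by (simp add: rmulv_def P1_def pvec_def)
    qed
    have z2: "lmulv n b 1 P = 0"
    proof (rule ext)
      fix s
      have "\<And>m. b i j m * b m 1 s = 0"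
      proof -
        fix m
        show "b i j m * b m 1 s = 0"
        proof (cases "b i j m = 0")
          case False
          then have "W i + W j \<le> W m" by (rule wt_b)
          then have "b m 1 s = 0" using b_heavy[of m 1 s] \<open>\<not> (W 1 + W j + W i \<le> D)\<close> by auto
          then show ?thesis by simp
        qed simp
      qed
      then show "lmulv n b 1 P s = 0 s" by (simp add: lmulv_def P_def pvec_def)
    qed
    show ?thesis unfolding z1 z2 by (rule eqv_refl)
  qed
  have "fmul (lin n P1) (mon [i]) \<approx> lin n (lmulv n b 1 P)" by (rule eqv_trans[OF A B])
  then show ?thesis unfolding geq eqv_def .
qed

lemma tauL_II: "x \<in> II \<Longrightarrow> tau_L n b x \<in> II"
proof -
  assume "x \<in> II"
  then have "x \<in> ideal_gen n 2 (pres_rels n r e b 2)" by (simp add: rel_ideal_def)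
  then show ?thesis
  proof (induction x rule: ideal_gen.induct)
    case (gen g)
    then consider (P) i where "i \<in> {2..n}" "r i \<noteq> \<infinity>"
        "g = fscale (of_nat (the_enat (r i))) (mon [i]) - (\<lambda>w. \<Sum>t\<in>{i+1..n}. e i t * mon [t] w)"
      | (Q) i j where "i \<in> {2..n}" "j \<in> {2..n}" "g = mon [j, i] - (\<lambda>w. \<Sum>t\<in>{max i j + 1..n}. b i j t * mon [t] w)"
      unfolding pres_rels_def by blast
    then show ?case
    proof cases
      case P
      then have "g = lin n (powvec i)" by (simp add: lin_powvec)
      then show ?thesis using powL[OF P(1) P(2)] by (simp only:)
    next
      case Q
      then have "g = mon [j, i] - lin n (pvec b j i)" by (simp add: lin_pvec)
      then show ?thesis using prodL[OF Q(1) Q(2)] by (simp only:)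
    qed
  next
    case zero then show ?case by (simp only: tauL_zero II_zero)
  next
    case (add x y) then show ?case by (simp only: tauL_add II_add)
  next
    case (scale x c) then show ?case by (simp only: tauL_scale II_scale)
  next
    case (lmul x u)
    then obtain t u' where u: "u = t # u'" by (cases u) auto
    have t: "t \<in> {2..n}" and u': "set u' \<subseteq> {2..n}" using lmul u by auto
    have xI: "x \<in> II" using lmul by (simp add: rel_ideal_def)
    have "(\<lambda>w. \<Sum>s\<in>{2..n}. fscale (b t 1 s) (fmul (mon (s # u')) x) w) \<in> II"
      by (rule II_sum) (use xI u' in \<open>auto intro!: II_scale II_lmul\<close>)
    then show ?case using t by (simp add: u tauL_lmul)
  next
    case (rmul x u)
    have xI: "x \<in> II" using rmul by (simp add: rel_ideal_def)
    have "fmul (tau_L n b x) (mon u) \<in> II" using rmul by (intro II_rmul) auto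
    then show ?case using rmul II_nil[OF xI] by (simp add: tauL_rmul)
  qed
qed

end


definition bsw :: "(nat \<Rightarrow> nat \<Rightarrow> nat \<Rightarrow> 'a) \<Rightarrow> nat \<Rightarrow> nat \<Rightarrow> nat \<Rightarrow> 'a" where
  "bsw b = (\<lambda>i j k. b j i k)"

lemma bsw_bsw: "bsw (bsw b) = b" by (simp add: bsw_def)

lemma pres_sym: "pres n r e b dv md \<Longrightarrow> pres n r e (bsw b) dv md"
  unfolding pres_def bsw_def by (metis max.commute)

lemma lmulv_sw: "lmulv n (bsw b) k v = rmulv n b v k"
  by (simp add: lmulv_def rmulv_def bsw_def)
lemma rmulv_sw: "rmulv n (bsw b) v i = lmulv n b i v"
  by (simp add: lmulv_def rmulv_def bsw_def)
lemma pvec_sw: "pvec (bsw b) j i = pvec b i j"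
  by (simp add: pvec_def bsw_def)

lemma weight_sw: "weight_ok n e (bsw b) = weight_ok n e b"
proof (rule ext)
  fix w :: "nat \<Rightarrow> nat"
  have "(\<forall>i\<in>{1..n}. \<forall>j\<in>{1..n}. \<forall>k\<in>{1..n}. b j i k \<noteq> 0 \<longrightarrow> w i + w j \<le> w k) \<longleftrightarrow>
        (\<forall>i\<in>{1..n}. \<forall>j\<in>{1..n}. \<forall>k\<in>{1..n}. b i j k \<noteq> 0 \<longrightarrow> w i + w j \<le> w k)"
  proof
    assume h: "\<forall>i\<in>{1..n}. \<forall>j\<in>{1..n}. \<forall>k\<in>{1..n}. b j i k \<noteq> 0 \<longrightarrow> w i + w j \<le> w k"
    show "\<forall>i\<in>{1..n}. \<forall>j\<in>{1..n}. \<forall>k\<in>{1..n}. b i j k \<noteq> 0 \<longrightarrow> w i + w j \<le> w k"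
    proof (intro ballI impI)
      fix i j k assume "i \<in> {1..n}" "j \<in> {1..n}" "k \<in> {1..n}" "b i j k \<noteq> 0"
      then have "w j + w i \<le> w k" using h by blast
      then show "w i + w j \<le> w k" by simp
    qed
  next
    assume h: "\<forall>i\<in>{1..n}. \<forall>j\<in>{1..n}. \<forall>k\<in>{1..n}. b i j k \<noteq> 0 \<longrightarrow> w i + w j \<le> w k"
    show "\<forall>i\<in>{1..n}. \<forall>j\<in>{1..n}. \<forall>k\<in>{1..n}. b j i k \<noteq> 0 \<longrightarrow> w i + w j \<le> w k"
    proof (intro ballI impI)
      fix i j k assume "i \<in> {1..n}" "j \<in> {1..n}" "k \<in> {1..n}" "b j i k \<noteq> 0"
      then have "w j + w i \<le> w k" using h by blast
      then show "w i + w j \<le> w k" by simp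
    qed
  qed
  then show "weight_ok n e (bsw b) w = weight_ok n e b w"
    unfolding weight_ok_def bsw_def by simp
qed
lemma wt_sw: "wt n e (bsw b) = wt n e b"
  by (rule ext) (simp add: wt_def weight_sw)
lemma dmax_sw: "dmax n e (bsw b) = dmax n e b"
  by (simp add: dmax_def wt_sw)

lemma te_sym: "test_equations dv md n r e b \<Longrightarrow> test_equations dv md n r e (bsw b)"
proof -
  assume te: "test_equations dv md n r e b"
  let ?c = "collect dv md n r e" and ?w = "wt n e b" and ?d = "dmax n e b"
    and ?rr = "\<lambda>i. of_nat (the_enat (r i))"
  have A: "\<forall>i\<in>{1..n}. \<forall>j\<in>{1..n}. \<forall>k\<in>{1..n}. ?w k + ?w j + ?w i \<le> ?d \<longrightarrow>
          ?c (lmulv n b k (?c (pvec b j i))) = ?c (rmulv n b (?c (pvec b k j)) i)"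
   and B: "\<forall>i\<in>{1..n}. \<forall>j\<in>{1..n}. r j \<noteq> \<infinity> \<longrightarrow> ?w j + ?w i \<le> ?d \<longrightarrow>
          ?c (svec (?rr j) (?c (pvec b j i))) = ?c (rmulv n b (?c (svec (?rr j) (unitv j))) i)"
   and C: "\<forall>i\<in>{1..n}. \<forall>j\<in>{1..n}. r i \<noteq> \<infinity> \<longrightarrow> ?w j + ?w i \<le> ?d \<longrightarrow>
          ?c (svec (?rr i) (?c (pvec b j i))) = ?c (lmulv n b j (?c (svec (?rr i) (unitv i))))"
    using te unfolding test_equations_def Let_def by blast+
  show ?thesis
    unfolding test_equations_def Let_def wt_sw dmax_sw lmulv_sw rmulv_sw pvec_sw
  proof (intro conjI ballI impI)
    fix i j k assume h: "i \<in> {1..n}" "j \<in> {1..n}" "k \<in> {1..n}" "?w k + ?w j + ?w i \<le> ?d"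
    then have "?w i + ?w j + ?w k \<le> ?d" by simp
    then show "?c (rmulv n b (?c (pvec b i j)) k) = ?c (lmulv n b i (?c (pvec b j k)))"
      using A h by metis
  next
    fix i j assume h: "i \<in> {1..n}" "j \<in> {1..n}" "r j \<noteq> \<infinity>" "?w j + ?w i \<le> ?d"
    then have "?w i + ?w j \<le> ?d" by simp
    then show "?c (svec (?rr j) (?c (pvec b i j))) = ?c (lmulv n b i (?c (svec (?rr j) (unitv j))))"
      using C h by metis
  next
    fix i j assume h: "i \<in> {1..n}" "j \<in> {1..n}" "r i \<noteq> \<infinity>" "?w j + ?w i \<le> ?d"
    then have "?w i + ?w j \<le> ?d" by simp
    then show "?c (svec (?rr i) (?c (pvec b i j))) = ?c (rmulv n b (?c (svec (?rr i) (unitv i))) j)"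
      using B h by metis
  qed
qed

lemma mon_rev: "mon u (rev w) = mon (rev u) w"
  by (auto simp: mon_def)

lemma revf_add: "revf (f + g) = revf f + revf g" by (simp add: revf_def fun_eq_iff)
lemma revf_scale: "revf (fscale c f) = fscale c (revf f)" by (simp add: revf_def fscale_def)
lemma revf_zero: "revf 0 = 0" by (simp add: revf_def fun_eq_iff)
lemma revf_revf: "revf (revf f) = f" by (simp add: revf_def)

lemma rev_ideal: "x \<in> rel_ideal n r e b 2 \<Longrightarrow> revf x \<in> rel_ideal n r e (bsw b) 2"
proof -
  assume "x \<in> rel_ideal n r e b 2"
  then have "x \<in> ideal_gen n 2 (pres_rels n r e b 2)" by (simp add: rel_ideal_def)
  then show ?thesis unfolding rel_ideal_def
  proof (induction x rule: ideal_gen.induct)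
    case (gen g)
    have "revf g \<in> pres_rels n r e (bsw b) 2"
      using gen unfolding pres_rels_def
    proof (elim UnE CollectE exE conjE)
      fix i assume "g = fscale (of_nat (the_enat (r i))) (mon [i]) - (\<lambda>w. \<Sum>t\<in>{i+1..n}. e i t * mon [t] w)"
        "i \<in> {2..n}" "r i \<noteq> \<infinity>"
      moreover have "revf g = g" using calculation(1)
        by (auto simp: revf_def fscale_def mon_rev fun_eq_iff)
      ultimately show "revf g \<in> {fscale (of_nat (the_enat (r i))) (mon [i]) - (\<lambda>w. \<Sum>t\<in>{i+1..n}. e i t * mon [t] w) | i. i \<in> {2..n} \<and> r i \<noteq> \<infinity>}
       \<union> {mon [j, i] - (\<lambda>w. \<Sum>t\<in>{max i j + 1..n}. bsw b i j t * mon [t] w) | i j. i \<in> {2..n} \<and> j \<in> {2..n}}"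
        by blast
    next
      fix i j assume g: "g = mon [j, i] - (\<lambda>w. \<Sum>t\<in>{max i j + 1..n}. b i j t * mon [t] w)"
        "i \<in> {2..n}" "j \<in> {2..n}"
      have "revf g = mon [i, j] - (\<lambda>w. \<Sum>t\<in>{max j i + 1..n}. bsw b j i t * mon [t] w)"
        using g(1) by (auto simp: revf_def mon_rev fun_eq_iff bsw_def max.commute)
      then show "revf g \<in> {fscale (of_nat (the_enat (r i))) (mon [i]) - (\<lambda>w. \<Sum>t\<in>{i+1..n}. e i t * mon [t] w) | i. i \<in> {2..n} \<and> r i \<noteq> \<infinity>}
       \<union> {mon [j, i] - (\<lambda>w. \<Sum>t\<in>{max i j + 1..n}. bsw b i j t * mon [t] w) | i j. i \<in> {2..n} \<and> j \<in> {2..n}}"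
        using g by blast
    qed
    then show ?case by (rule ideal_gen.gen)
  next
    case zero then show ?case by (simp only: revf_zero ideal_gen.zero)
  next
    case (add x y) then show ?case by (simp only: revf_add ideal_gen.add)
  next
    case (scale x c) then show ?case by (simp only: revf_scale ideal_gen.scale)
  next
    case (lmul x u)
    have "fmul (revf x) (mon (rev u)) \<in> ideal_gen n 2 (pres_rels n r e (bsw b) 2)"
      using lmul by (intro ideal_gen.rmul) auto
    then show ?case by (simp only: revf_fmul revf_mon)
  next
    case (rmul x u)
    have "fmul (mon (rev u)) (revf x) \<in> ideal_gen n 2 (pres_rels n r e (bsw b) 2)"
      using rmul by (intro ideal_gen.lmul) auto
    then show ?case by (simp only: revf_fmul revf_mon)
  qed
qed

lemma tauR_rev: "tau_R n b f = revf (tau_L n (bsw b) (revf f))"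
proof (rule ext)
  fix u
  show "tau_R n b f u = revf (tau_L n (bsw b) (revf f)) u"
  proof (cases u rule: rev_exhaust)
    case Nil then show ?thesis by (simp add: tau_R_def tau_L_def revf_def)
  next
    case (snoc xs a)
    then show ?thesis by (simp add: tau_R_def tau_L_def revf_def bsw_def)
  qed
qed

lemma tauR_diff: "tau_R n b (f - g) = tau_R n b f - tau_R n b g"
  by (auto simp: tau_R_def fun_eq_iff algebra_simps sum_subtractf)

lemma revf_F: "f \<in> free_alg n k \<Longrightarrow> revf f \<in> free_alg n k"
proof -
  assume f: "f \<in> free_alg n k"
  have "{w. revf f w \<noteq> 0} = rev ` {w. f w \<noteq> 0}"
    by (auto simp: revf_def image_iff) (metis rev_rev_ident)
  then have "finite {w. revf f w \<noteq> 0}" using f by (simp add: free_alg_def)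
  moreover have "\<forall>w. revf f w \<noteq> 0 \<longrightarrow> w \<noteq> [] \<and> set w \<subseteq> {k..n}"
  proof (intro allI impI)
    fix w assume "revf f w \<noteq> 0"
    then have "f (rev w) \<noteq> 0" by (simp add: revf_def)
    then have "rev w \<noteq> [] \<and> set (rev w) \<subseteq> {k..n}" using f unfolding free_alg_def by blast
    then show "w \<noteq> [] \<and> set w \<subseteq> {k..n}" by simp
  qed
  ultimately show ?thesis by (simp add: free_alg_def)
qed

context pres begin

lemma tauL_F: "f \<in> free_alg n 2 \<Longrightarrow> tau_L n b f \<in> free_alg n 2"
proof -
  assume f: "f \<in> free_alg n 2"
  have sub: "{w. tau_L n b f w \<noteq> 0} \<subseteq> (\<lambda>(t, u'). t # u') ` ({2..n} \<times> (tl ` {w. f w \<noteq> 0}))"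
  proof
    fix w assume "w \<in> {w. tau_L n b f w \<noteq> 0}"
    then have nz: "tau_L n b f w \<noteq> 0" by simp
    then obtain a u' where w: "w = a # u'" by (cases w) (auto simp: tau_L_def)
    then have "(\<Sum>m\<in>{1..n}. f (m # u') * b m 1 a) \<noteq> 0" using nz by (simp add: tau_L_def)
    then obtain m where m: "f (m # u') * b m 1 a \<noteq> 0" by (meson sum.neutral)
    then have "f (m # u') \<noteq> 0" "b m 1 a \<noteq> 0" by auto
    then have "a \<in> {2..n}" using b_supp[of m 1 a] by auto
    moreover have "u' \<in> tl ` {w. f w \<noteq> 0}" using \<open>f (m # u') \<noteq> 0\<close> by (auto intro: image_eqI[of _ _ "m # u'"])
    ultimately show "w \<in> (\<lambda>(t, u'). t # u') ` ({2..n} \<times> (tl ` {w. f w \<noteq> 0}))" using w by auto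
  qed
  have "finite {w. tau_L n b f w \<noteq> 0}"
    by (rule finite_subset[OF sub]) (use f in \<open>auto simp: free_alg_def\<close>)
  moreover have "\<forall>w. tau_L n b f w \<noteq> 0 \<longrightarrow> w \<noteq> [] \<and> set w \<subseteq> {2..n}"
  proof (intro allI impI)
    fix w assume nz: "tau_L n b f w \<noteq> 0"
    then obtain a u' where w: "w = a # u'" by (cases w) (auto simp: tau_L_def)
    then have "(\<Sum>m\<in>{1..n}. f (m # u') * b m 1 a) \<noteq> 0" using nz by (simp add: tau_L_def)
    then obtain m where m: "f (m # u') * b m 1 a \<noteq> 0" by (meson sum.neutral)
    then have "f (m # u') \<noteq> 0" "b m 1 a \<noteq> 0" by auto
    then have "a \<in> {2..n}" using b_supp[of m 1 a] by auto
    moreover have "set (m # u') \<subseteq> {2..n}" using f \<open>f (m # u') \<noteq> 0\<close> unfolding free_alg_def by blast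
    ultimately have "a \<in> {2..n}" "set (m # u') \<subseteq> {2..n}" by auto
    then show "w \<noteq> [] \<and> set w \<subseteq> {2..n}" using w by auto
  qed
  ultimately show ?thesis by (simp add: free_alg_def)
qed

end

lemma main_generic:
  assumes "pres_te n r e b dv md"
  shows "induces_linear_map (free_alg n 2) (rel_ideal n r e b 2) (tau_L n b) \<and>
         induces_linear_map (free_alg n 2) (rel_ideal n r e b 2) (tau_R n b)"
proof -
  interpret P: pres_te n r e b dv md by fact
  have pb': "pres n r e (bsw b) dv md" by (rule pres_sym) (rule P.pres_axioms)
  have teb': "test_equations dv md n r e (bsw b)" by (rule te_sym) (rule P.te)
  interpret Q: pres_te n r e "bsw b" dv md
    using pb' teb' by (simp add: pres_te_def pres_te_axioms_def)
  have L: "induces_linear_map (free_alg n 2) (rel_ideal n r e b 2) (tau_L n b)"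
    unfolding induces_linear_map_def
  proof (intro conjI ballI allI impI)
    show "tau_L n b ` free_alg n 2 \<subseteq> free_alg n 2" using P.tauL_F by blast
  next
    fix f g x y
    show "tau_L n b (fscale x f + fscale y g) = fscale x (tau_L n b f) + fscale y (tau_L n b g)"
      by (simp only: tauL_add tauL_scale)
  next
    fix f g assume "f - g \<in> rel_ideal n r e b 2"
    then show "tau_L n b f - tau_L n b g \<in> rel_ideal n r e b 2"
      using P.tauL_II by (simp only: tauL_diff[symmetric])
  qed
  have R: "induces_linear_map (free_alg n 2) (rel_ideal n r e b 2) (tau_R n b)"
    unfolding induces_linear_map_def
  proof (intro conjI ballI allI impI)
    show "tau_R n b ` free_alg n 2 \<subseteq> free_alg n 2"
      using Q.tauL_F revf_F by (auto simp: tauR_rev)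
  next
    fix f g x y
    show "tau_R n b (fscale x f + fscale y g) = fscale x (tau_R n b f) + fscale y (tau_R n b g)"
      by (simp only: tauR_add tauR_scale)
  next
    fix f g assume "f - g \<in> rel_ideal n r e b 2"
    then have "revf (f - g) \<in> rel_ideal n r e (bsw b) 2" by (rule rev_ideal)
    then have "tau_L n (bsw b) (revf (f - g)) \<in> rel_ideal n r e (bsw b) 2" by (rule Q.tauL_II)
    then have "revf (tau_L n (bsw b) (revf (f - g))) \<in> rel_ideal n r e (bsw (bsw b)) 2" by (rule rev_ideal)
    then have "tau_R n b (f - g) \<in> rel_ideal n r e b 2" by (simp only: bsw_bsw tauR_rev)
    then show "tau_R n b f - tau_R n b g \<in> rel_ideal n r e b 2" by (simp only: tauR_diff)
  qed
  show ?thesis using L R by blast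
qed


lemma pres_te_int:
  assumes np: "nil_pres int_rng n r (e :: nat \<Rightarrow> nat \<Rightarrow> int) b" and te: "test_equations (div) (mod) n r e b"
  shows "pres_te n r e b (div) (mod)"
proof -
  have es: "\<And>i k. e i k \<noteq> 0 \<Longrightarrow> 1 \<le> i \<and> i < k \<and> k \<le> n" using np unfolding nil_pres_def by auto
  have bs: "\<And>i j k. b i j k \<noteq> 0 \<Longrightarrow> 1 \<le> i \<and> i \<le> n \<and> 1 \<le> j \<and> j \<le> n \<and> max i j < k \<and> k \<le> n"
    using np unfolding nil_pres_def by auto
  have ds: "\<And>i. i \<in> {1..n} \<Longrightarrow> r i \<noteq> \<infinity> \<Longrightarrow> int (the_enat (r i)) div int (the_enat (r i)) = 1"
  proof -
    fix i assume i: "i \<in> {1..n}" and ri: "r i \<noteq> \<infinity>"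
    have "r i \<noteq> 0" using np i unfolding nil_pres_def by auto
    then obtain m where m: "r i = enat m" "m \<noteq> 0" using ri by (cases "r i") (auto simp: zero_enat_def)
    then show "int (the_enat (r i)) div int (the_enat (r i)) = 1" by simp
  qed
  show ?thesis
    unfolding pres_te_def pres_def pres_te_axioms_def
    using es bs ds te by auto
qed

lemma pres_te_field:
  assumes np: "nil_pres (\<lambda>_ _. True) n (\<lambda>_. \<infinity>) (e :: nat \<Rightarrow> nat \<Rightarrow> 'a::field) b"
    and te: "test_equations (\<lambda>_ _. 0) (\<lambda>x _. x) n (\<lambda>_. \<infinity>) e b"
  shows "pres_te n (\<lambda>_. \<infinity>) e b (\<lambda>_ _. 0) (\<lambda>x _. x)"
proof -
  have es: "\<And>i k. e i k \<noteq> 0 \<Longrightarrow> 1 \<le> i \<and> i < k \<and> k \<le> n" using np unfolding nil_pres_def by auto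
  have bs: "\<And>i j k. b i j k \<noteq> 0 \<Longrightarrow> 1 \<le> i \<and> i \<le> n \<and> 1 \<le> j \<and> j \<le> n \<and> max i j < k \<and> k \<le> n"
    using np unfolding nil_pres_def by auto
  show ?thesis
    unfolding pres_te_def pres_def pres_te_axioms_def
    using es bs te by auto
qed

theorem lemma22:
  shows "(\<forall>n r (e :: nat \<Rightarrow> nat \<Rightarrow> int) b.
            nil_pres int_rng n r e b \<and> consistent int_rng n r e b 2 \<and>
            test_equations (div) (mod) n r e b \<longrightarrow>
            induces_linear_map (free_alg n 2) (rel_ideal n r e b 2) (tau_L n b) \<and>
            induces_linear_map (free_alg n 2) (rel_ideal n r e b 2) (tau_R n b))
       \<and> (\<forall>n (e :: nat \<Rightarrow> nat \<Rightarrow> 'a::field) b.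
            let r = (\<lambda>_. \<infinity>); rng = (\<lambda>_ _. True); dv = (\<lambda>_ _. 0); md = (\<lambda>x _. x) in
            nil_pres rng n r e b \<and> consistent rng n r e b 2 \<and>
            test_equations dv md n r e b \<longrightarrow>
            induces_linear_map (free_alg n 2) (rel_ideal n r e b 2) (tau_L n b) \<and>
            induces_linear_map (free_alg n 2) (rel_ideal n r e b 2) (tau_R n b))"
proof (rule conjI)
  show "\<forall>n r (e :: nat \<Rightarrow> nat \<Rightarrow> int) b.
            nil_pres int_rng n r e b \<and> consistent int_rng n r e b 2 \<and>
            test_equations (div) (mod) n r e b \<longrightarrow>
            induces_linear_map (free_alg n 2) (rel_ideal n r e b 2) (tau_L n b) \<and>
            induces_linear_map (free_alg n 2) (rel_ideal n r e b 2) (tau_R n b)"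
  proof (intro allI impI)
    fix n r and e :: "nat \<Rightarrow> nat \<Rightarrow> int" and b
    assume h: "nil_pres int_rng n r e b \<and> consistent int_rng n r e b 2 \<and> test_equations (div) (mod) n r e b"
    then have "pres_te n r e b (div) (mod)" using pres_te_int by blast
    then show "induces_linear_map (free_alg n 2) (rel_ideal n r e b 2) (tau_L n b) \<and>
            induces_linear_map (free_alg n 2) (rel_ideal n r e b 2) (tau_R n b)"
      by (rule main_generic)
  qed
next
  show "\<forall>n (e :: nat \<Rightarrow> nat \<Rightarrow> 'a::field) b.
            let r = (\<lambda>_. \<infinity>); rng = (\<lambda>_ _. True); dv = (\<lambda>_ _. 0); md = (\<lambda>x _. x) in
            nil_pres rng n r e b \<and> consistent rng n r e b 2 \<and>
            test_equations dv md n r e b \<longrightarrow>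
            induces_linear_map (free_alg n 2) (rel_ideal n r e b 2) (tau_L n b) \<and>
            induces_linear_map (free_alg n 2) (rel_ideal n r e b 2) (tau_R n b)"
    unfolding Let_def
  proof (intro allI impI)
    fix n and e :: "nat \<Rightarrow> nat \<Rightarrow> 'a::field" and b
    assume h: "nil_pres (\<lambda>_ _. True) n (\<lambda>_. \<infinity>) e b \<and> consistent (\<lambda>_ _. True) n (\<lambda>_. \<infinity>) e b 2 \<and>
            test_equations (\<lambda>_ _. 0) (\<lambda>x _. x) n (\<lambda>_. \<infinity>) e b"
    then have "pres_te n (\<lambda>_. \<infinity>) e b (\<lambda>_ _. 0) (\<lambda>x _. x)" using pres_te_field by blast
    then show "induces_linear_map (free_alg n 2) (rel_ideal n (\<lambda>_. \<infinity>) e b 2) (tau_L n b) \<and>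
            induces_linear_map (free_alg n 2) (rel_ideal n (\<lambda>_. \<infinity>) e b 2) (tau_R n b)"
      by (rule main_generic)
  qed
qed


end
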